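(* Let $N>0$ and $\tau\in(0,1)$. There exists a constant $C=C(\tau,N)>0$, depending only on $\tau$ and $N$, such that every radial solution $(v_1,v_2)$ of $(P)_\tau$ (as described in the context) satisfies $$v_1(r)+2(N+1)\log r\le C\quad\text{and}\quad v_2(r)+2\log r\le C\qquad\text{for all } r>0.$$
   Context: A radial solution of $(P)_\tau$ is a pair $v_1,v_2\in C([0,\infty))\cap C^2((0,\infty))$ with, for $r>0$, $$-(rv_1')'=r^{2N+1}e^{v_1}-\tau re^{v_2},\qquad -(rv_2')'=re^{v_2}-\tau r^{2N+1}e^{v_1},$$ $v_1'(0)=v_2'(0)=0$, $$\beta_1=\int_0^\infty r^{2N+1}e^{v_1}\,dr<\infty,\qquad \beta_2=\int_0^\infty re^{v_2}\,dr<\infty,$$ and $\lim_{r\to\infty}rv_1'(r)=-(\beta_1-\tau\beta_2)$, $\lim_{r\to\infty}rv_2'(r)=-(\beta_2-\tau\beta_1)$. *)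

theory Defs
  imports "HOL-Analysis.Analysis"
begin

definition beta1 :: "real \<Rightarrow> (real \<Rightarrow> real) \<Rightarrow> real" where
  "beta1 N v1 = integral {0..} (\<lambda>r. r powr (2*N+1) * exp (v1 r))"

definition beta2 :: "(real \<Rightarrow> real) \<Rightarrow> real" where
  "beta2 v2 = integral {0..} (\<lambda>r. r * exp (v2 r))"

definition C2_pos :: "(real \<Rightarrow> real) \<Rightarrow> bool" where
  "C2_pos v \<longleftrightarrow>
     (\<forall>r>0. v differentiable (at r) \<and> deriv v differentiable (at r)) \<and>
     continuous_on {0<..} (deriv (deriv v))"

definition radial_solution ::
  "real \<Rightarrow> real \<Rightarrow> (real \<Rightarrow> real) \<Rightarrow> (real \<Rightarrow> real) \<Rightarrow> bool" where
  "radial_solution N \<tau> v1 v2 \<longleftrightarrow>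
     continuous_on {0..} v1 \<and> continuous_on {0..} v2 \<and>
     C2_pos v1 \<and> C2_pos v2 \<and>
     (\<forall>r>0. - deriv (\<lambda>s. s * deriv v1 s) r
              = r powr (2*N+1) * exp (v1 r) - \<tau> * r * exp (v2 r)) \<and>
     (\<forall>r>0. - deriv (\<lambda>s. s * deriv v2 s) r
              = r * exp (v2 r) - \<tau> * r powr (2*N+1) * exp (v1 r)) \<and>
     (v1 has_real_derivative 0) (at 0 within {0..}) \<and>
     (v2 has_real_derivative 0) (at 0 within {0..}) \<and>
     (\<lambda>r. r powr (2*N+1) * exp (v1 r)) integrable_on {0..} \<and>
     (\<lambda>r. r * exp (v2 r)) integrable_on {0..} \<and>
     ((\<lambda>r. r * deriv v1 r) \<longlongrightarrow> - (beta1 N v1 - \<tau> * beta2 v2)) at_top \<and>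
     ((\<lambda>r. r * deriv v2 r) \<longlongrightarrow> - (beta2 v2 - \<tau> * beta1 N v1)) at_top"

end

theory Submission
  imports Defs
begin


lemma rv_tendsto_0:
  fixes v g :: "real \<Rightarrow> real"
  assumes cont: "continuous_on {0..} v"
  and dv: "\<And>r. r>0 \<Longrightarrow> (v has_real_derivative deriv v r) (at r)"
  and da: "\<And>r. r>0 \<Longrightarrow> ((\<lambda>s. s * deriv v s) has_real_derivative g r) (at r)"
  and gb: "\<And>r. 0<r \<Longrightarrow> r\<le>1 \<Longrightarrow> \<bar>g r\<bar> \<le> M"
  shows "((\<lambda>r. r * deriv v r) \<longlongrightarrow> 0) (at_right 0)"
proof (rule Lim_null_comparison)
  let ?G = "\<lambda>r. 2 * \<bar>v r - v (r/2)\<bar> + M * r"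
  have c2: "continuous_on {0..} (\<lambda>r. v (r/2))"
    by (rule continuous_on_compose2[OF cont]) (auto intro!: continuous_intros)
  have cG: "continuous_on {0..} ?G"
    by (intro continuous_intros cont c2)
  then have "(?G \<longlongrightarrow> ?G 0) (at 0 within {0..})"
    using continuous_on_def[THEN iffD1, rule_format, OF cG, of 0] by simp
  then have "(?G \<longlongrightarrow> ?G 0) (at_right 0)"
    by (rule tendsto_within_subset) auto
  then show "(?G \<longlongrightarrow> 0) (at_right 0)" by simp
  have "\<forall>\<^sub>F r in at_right 0. 0 < r \<and> r \<le> (1::real)"
    by (simp add: eventually_at_right_less eventually_conj eventually_at_right_field) (rule exI[of _ 1], auto)
  then show "\<forall>\<^sub>F r in at_right 0. norm (r * deriv v r) \<le> ?G r"
  proof (rule eventually_mono)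
    fix r :: real assume r: "0 < r \<and> r \<le> 1"
    obtain z where z: "r/2 < z" "z < r" "v r - v (r/2) = (r - r/2) * deriv v z"
      using MVT2[of "r/2" r v "deriv v"] r dv by auto
    have "\<bar>z * deriv v z\<bar> \<le> 2 * \<bar>v r - v (r/2)\<bar>"
    proof -
      have e: "v r - v (r/2) = (r/2) * deriv v z" using z(3) by (simp add: field_simps)
      have "\<bar>v r - v (r/2)\<bar> = \<bar>(r/2) * deriv v z\<bar>" by (subst e) (rule refl)
      also have "\<dots> = (r/2) * \<bar>deriv v z\<bar>" using r by (simp add: abs_mult)
      finally have "\<bar>v r - v (r/2)\<bar> = (r/2) * \<bar>deriv v z\<bar>" .
      moreover have "\<bar>z * deriv v z\<bar> = z * \<bar>deriv v z\<bar>" using z r by (simp add: abs_mult)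
      moreover have "z * \<bar>deriv v z\<bar> \<le> r * \<bar>deriv v z\<bar>" using z by (intro mult_right_mono) auto
      ultimately show ?thesis by simp
    qed
    moreover obtain w where w: "z < w" "w < r" "r * deriv v r - z * deriv v z = (r - z) * g w"
      using MVT2[of z r "\<lambda>s. s * deriv v s" g] z r da by auto
    have "\<bar>(r - z) * g w\<bar> \<le> M * r"
    proof -
      have "\<bar>g w\<bar> \<le> M" using gb[of w] w z r by auto
      hence "\<bar>(r - z) * g w\<bar> \<le> (r - z) * M" using z by (simp add: abs_mult mult_left_mono)
      also have "\<dots> \<le> r * M" using z r \<open>\<bar>g w\<bar> \<le> M\<close> by (intro mult_right_mono) auto
      also have "\<dots> = M * r" by simp
      finally show ?thesis .
    qed
    moreover have "\<bar>r * deriv v r\<bar> \<le> \<bar>r * deriv v r - z * deriv v z\<bar> + \<bar>z * deriv v z\<bar>"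
      using abs_triangle_ineq2[of "r * deriv v r" "z * deriv v z"] by linarith
    ultimately show "norm (r * deriv v r) \<le> ?G r" unfolding real_norm_def w(3) by linarith
  qed
qed


lemma da_lem:
  fixes v :: "real \<Rightarrow> real"
  assumes "deriv v differentiable (at r)"
  and "- deriv (\<lambda>s. s * deriv v s) r = F"
  shows "((\<lambda>s. s * deriv v s) has_real_derivative (-F)) (at r)"
proof -
  have dd: "(deriv v has_real_derivative deriv (deriv v) r) (at r)"
    using assms(1) DERIV_deriv_iff_real_differentiable by blast
  have h: "((\<lambda>s. s * deriv v s) has_real_derivative (deriv v r + r * deriv (deriv v) r)) (at r)"
    by (auto intro!: derivative_eq_intros dd)
  then have "deriv (\<lambda>s. s * deriv v s) r = deriv v r + r * deriv (deriv v) r"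
    by (rule DERIV_imp_deriv)
  with assms(2) have "deriv v r + r * deriv (deriv v) r = -F" by linarith
  with h show ?thesis by simp
qed

lemma dpow_lem:
  fixes v :: "real \<Rightarrow> real"
  assumes r: "r > 0" and dv: "(v has_real_derivative d) (at r)"
  shows "((\<lambda>s. s powr k * exp (v s)) has_real_derivative (r powr (k-1) * exp (v r) * (r*d + k))) (at r)"
proof -
  have h: "((\<lambda>s. s powr k * exp (v s)) has_real_derivative
      (k * r powr (k-1) * exp (v r) + r powr k * (exp (v r) * d))) (at r)"
    using r dv by (intro derivative_eq_intros has_real_derivative_powr) auto
  have "r powr k = r powr ((k-1) + 1)" by simp
  also have "\<dots> = r powr (k-1) * r powr 1" by (rule powr_add)
  also have "\<dots> = r powr (k-1) * r" using r by simp
  finally have rk: "r powr k = r powr (k-1) * r" .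
  have "k * r powr (k-1) * exp (v r) + r powr k * (exp (v r) * d) = r powr (k-1) * exp (v r) * (r*d + k)"
    unfolding rk by (simp add: algebra_simps)
  with h show ?thesis by simp
qed


lemma dE_lem:
  fixes X Y P Q :: "real \<Rightarrow> real" and c \<tau> X' Y' P' Q' r :: real
  assumes hX: "(X has_real_derivative X') (at r)"
  and hY: "(Y has_real_derivative Y') (at r)"
  and hP: "(P has_real_derivative P') (at r)"
  and hQ: "(Q has_real_derivative Q') (at r)"
  shows "((\<lambda>r. c * (X r * X r + 2*\<tau>*X r*Y r + Y r * Y r) + P r + Q r) has_real_derivative
     (c * (2*X r*X' + 2*\<tau>*(X'*Y r + X r*Y') + 2*Y r*Y') + P' + Q')) (at r)"
proof -
  have a: "((\<lambda>r. X r * X r + 2*\<tau>*X r*Y r + Y r * Y r) has_real_derivative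
     (2*X r*X' + 2*\<tau>*(X'*Y r + X r*Y') + 2*Y r*Y')) (at r)"
    using hX hY by (auto intro!: derivative_eq_intros simp: algebra_simps)
  show ?thesis
    by (intro DERIV_add DERIV_cmult a hP hQ)
qed


lemma bound_lem:
  fixes v :: "real \<Rightarrow> real"
  assumes "continuous_on {0..} v"
  obtains B where "\<And>x. 0 \<le> x \<Longrightarrow> x \<le> 1 \<Longrightarrow> \<bar>v x\<bar> \<le> B"
proof -
  have "compact (v ` {0..1})"
    by (rule compact_continuous_image[OF continuous_on_subset[OF assms]]) auto
  then have "bounded (v ` {0..1})" by (rule compact_imp_bounded)
  then obtain B where "\<forall>y\<in>v ` {0..1}. \<bar>y\<bar> \<le> B" unfolding bounded_real by blast
  then show ?thesis by (intro that[of B]) auto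
qed

lemma gb_lem:
  fixes a b p t r B1 B2 :: real
  assumes "0 < r" "r \<le> 1" "0 \<le> p" "0 \<le> t" "t < 1" "\<bar>a\<bar> \<le> B1" "\<bar>b\<bar> \<le> B2"
  shows "\<bar>-(r powr p * exp a - t * r * exp b)\<bar> \<le> exp B1 + exp B2"
proof -
  have p1: "r powr p \<le> 1" using assms by (intro powr_le1) auto
  have "r powr p * exp a \<le> 1 * exp B1"
    using assms p1 by (intro mult_mono) auto
  moreover have "t * r * exp b \<le> 1 * exp B2"
  proof (intro mult_mono)
    show "t * r \<le> 1" using assms by (simp add: mult_le_one)
  qed (use assms in auto)
  moreover have "0 \<le> r powr p * exp a" "0 \<le> t * r * exp b" using assms by auto
  ultimately show ?thesis by linarith
qed

lemma gb_lem2: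
  fixes a b p t r B1 B2 :: real
  assumes "0 < r" "r \<le> 1" "0 \<le> p" "0 \<le> t" "t < 1" "\<bar>a\<bar> \<le> B1" "\<bar>b\<bar> \<le> B2"
  shows "\<bar>-(r * exp b - t * r powr p * exp a)\<bar> \<le> exp B1 + exp B2"
proof -
  have p1: "r powr p \<le> 1" using assms by (intro powr_le1) auto
  have "r powr p * exp a \<le> 1 * exp B1"
    using assms p1 by (intro mult_mono) auto
  then have "t * (r powr p * exp a) \<le> 1 * exp B1"
    using assms by (intro mult_mono) auto
  moreover have "r * exp b \<le> 1 * exp B2"
    using assms by (intro mult_mono) auto
  moreover have "0 \<le> t * (r powr p * exp a)" "0 \<le> r * exp b" using assms by auto
  ultimately show ?thesis by (simp add: mult.assoc)
qed

lemma alg_lem: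
  fixes c \<tau> x y f1 f2 :: real
  assumes cc: "c * (2*(1-\<tau>^2)) = 1"
  shows "c * (2*x*(-(f1 - \<tau>*f2)) + 2*\<tau>*((-(f1-\<tau>*f2))*y + x*(-(f2-\<tau>*f1))) + 2*y*(-(f2-\<tau>*f1))) + f1*x + f2*y = 0"
proof -
  have "2*x*(-(f1 - \<tau>*f2)) + 2*\<tau>*((-(f1-\<tau>*f2))*y + x*(-(f2-\<tau>*f1))) + 2*y*(-(f2-\<tau>*f1))
     = -(2*(1-\<tau>^2))*(f1*x + f2*y)" (is "?I = _") by (simp add: algebra_simps power2_eq_square)
  then have "c * (2*x*(-(f1 - \<tau>*f2)) + 2*\<tau>*((-(f1-\<tau>*f2))*y + x*(-(f2-\<tau>*f1))) + 2*y*(-(f2-\<tau>*f1)))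
     = -(c * (2*(1-\<tau>^2)))*(f1*x + f2*y)" by (simp only:) (simp add: algebra_simps)
  then show ?thesis unfolding cc by simp
qed

theorem mainTheorem10:
  fixes N \<tau> :: real
  assumes "N > 0" and "0 < \<tau>" and "\<tau> < 1"
  shows "\<exists>C>0. \<forall>v1 v2. radial_solution N \<tau> v1 v2 \<longrightarrow>
           (\<forall>r>0. v1 r + 2*(N+1) * ln r \<le> C \<and> v2 r + 2 * ln r \<le> C)"
proof -
  define K where "K = 2*N+2"
  define c where "c = 1/(2*(1-\<tau>^2))"
  define E0 where "E0 = c * (K*K + 2*\<tau>*K*2 + 2*2)"
  have tau2: "\<tau>^2 < 1" using assms by (simp add: power_less_one_iff abs_less_iff)
  have cpos: "c > 0" unfolding c_def using tau2 by simp
  have Kpos: "K > 0" unfolding K_def using assms by simp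
  have E0pos: "E0 > 0" unfolding E0_def using cpos Kpos assms by (intro mult_pos_pos add_pos_pos) auto
  show ?thesis
  proof (intro exI[of _ "\<bar>ln E0\<bar> + 1"] conjI)
    show "0 < \<bar>ln E0\<bar> + 1" by simp
    show "\<forall>v1 v2. radial_solution N \<tau> v1 v2 \<longrightarrow>
           (\<forall>r>0. v1 r + 2*(N+1) * ln r \<le> \<bar>ln E0\<bar> + 1 \<and> v2 r + 2 * ln r \<le> \<bar>ln E0\<bar> + 1)"
    proof (intro allI impI)
    fix v1 v2 :: "real \<Rightarrow> real" and r :: real
    assume rs: "radial_solution N \<tau> v1 v2" and r: "r > 0"
    have c1: "continuous_on {0..} v1" and c2: "continuous_on {0..} v2"
      and C1: "C2_pos v1" and C2: "C2_pos v2"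
      and ode1: "\<And>r. r>0 \<Longrightarrow> - deriv (\<lambda>s. s * deriv v1 s) r
              = r powr (2*N+1) * exp (v1 r) - \<tau> * r * exp (v2 r)"
      and ode2: "\<And>r. r>0 \<Longrightarrow> - deriv (\<lambda>s. s * deriv v2 s) r
              = r * exp (v2 r) - \<tau> * r powr (2*N+1) * exp (v1 r)"
      using rs unfolding radial_solution_def by auto
    have dv1: "\<And>r. r>0 \<Longrightarrow> (v1 has_real_derivative deriv v1 r) (at r)"
      using C1 unfolding C2_pos_def DERIV_deriv_iff_real_differentiable by blast
    have dv2: "\<And>r. r>0 \<Longrightarrow> (v2 has_real_derivative deriv v2 r) (at r)"
      using C2 unfolding C2_pos_def DERIV_deriv_iff_real_differentiable by blast
    have da1: "\<And>r. r>0 \<Longrightarrow> ((\<lambda>s. s * deriv v1 s) has_real_derivative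
        (-(r powr (2*N+1) * exp (v1 r) - \<tau> * r * exp (v2 r)))) (at r)"
      using C1 ode1 unfolding C2_pos_def by (intro da_lem) auto
    have da2: "\<And>r. r>0 \<Longrightarrow> ((\<lambda>s. s * deriv v2 s) has_real_derivative
        (-(r * exp (v2 r) - \<tau> * r powr (2*N+1) * exp (v1 r)))) (at r)"
      using C2 ode2 unfolding C2_pos_def by (intro da_lem) auto
    obtain B1 where B1: "\<And>x. 0 \<le> x \<Longrightarrow> x \<le> 1 \<Longrightarrow> \<bar>v1 x\<bar> \<le> B1" using bound_lem[OF c1] by blast
    obtain B2 where B2: "\<And>x. 0 \<le> x \<Longrightarrow> x \<le> 1 \<Longrightarrow> \<bar>v2 x\<bar> \<le> B2" using bound_lem[OF c2] by blast
    have lim1: "((\<lambda>r. r * deriv v1 r) \<longlongrightarrow> 0) (at_right 0)"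
    proof (rule rv_tendsto_0[OF c1 dv1 da1])
      fix r :: real assume "0 < r" "r \<le> 1"
      then show "\<bar>-(r powr (2*N+1) * exp (v1 r) - \<tau> * r * exp (v2 r))\<bar> \<le> exp B1 + exp B2"
        using assms B1[of r] B2[of r] by (intro gb_lem) auto
    qed
    have lim2: "((\<lambda>r. r * deriv v2 r) \<longlongrightarrow> 0) (at_right 0)"
    proof (rule rv_tendsto_0[OF c2 dv2 da2])
      fix r :: real assume r: "0 < r" "r \<le> 1"
      then show "\<bar>-(r * exp (v2 r) - \<tau> * r powr (2*N+1) * exp (v1 r))\<bar> \<le> exp B1 + exp B2"
        using assms B1[of r] B2[of r] by (intro gb_lem2) auto
    qed
    define X where "X = (\<lambda>s. s * deriv v1 s + K)"
    define Y where "Y = (\<lambda>s. s * deriv v2 s + 2)"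
    define E where "E = (\<lambda>s. c * (X s * X s + 2*\<tau>*X s*Y s + Y s * Y s) + s powr K * exp (v1 s) + s powr 2 * exp (v2 s))"
    have K1: "K - 1 = 2*N+1" by (simp add: K_def)
    have cc: "c * (2*(1-\<tau>^2)) = 1" unfolding c_def using tau2 by simp
    have dE: "(E has_real_derivative 0) (at s)" if s: "s > 0" for s
    proof -
      have hX: "(X has_real_derivative (-(s powr (2*N+1) * exp (v1 s) - \<tau> * (s * exp (v2 s))))) (at s)"
        unfolding X_def using DERIV_add[OF da1[OF s] DERIV_const[of K]] by (simp add: mult.assoc)
      have hY: "(Y has_real_derivative (-(s * exp (v2 s) - \<tau> * (s powr (2*N+1) * exp (v1 s))))) (at s)"
        unfolding Y_def using DERIV_add[OF da2[OF s] DERIV_const[of 2]] by (simp add: mult.assoc)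
      have hP: "((\<lambda>s. s powr K * exp (v1 s)) has_real_derivative (s powr (2*N+1) * exp (v1 s) * X s)) (at s)"
        using dpow_lem[OF s dv1[OF s], of K] unfolding K1 X_def .
      have hQ: "((\<lambda>s. s powr 2 * exp (v2 s)) has_real_derivative (s * exp (v2 s) * Y s)) (at s)"
        using dpow_lem[OF s dv2[OF s], of 2] s unfolding Y_def by simp
      note h = dE_lem[OF hX hY hP hQ, of c \<tau>]
      show ?thesis using h unfolding alg_lem[OF cc] E_def .
    qed
    have Econst: "E s = E 1" if s: "s > 0" for s
    proof -
      consider "s < 1" | "s = 1" | "s > 1" by linarith
      then show ?thesis
      proof cases
        case 1
        then obtain z where "E 1 - E s = (1 - s) * 0" using MVT2[of s 1 E "\<lambda>_. 0"] dE s by force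
        then show ?thesis by simp
      next
        case 3
        then obtain z where "E s - E 1 = (s - 1) * 0" using MVT2[of 1 s E "\<lambda>_. 0"] dE by force
        then show ?thesis by simp
      qed simp
    qed
    have lv1: "(v1 \<longlongrightarrow> v1 0) (at_right 0)"
    proof -
      have "(v1 \<longlongrightarrow> v1 0) (at 0 within {0..})"
        using continuous_on_def[THEN iffD1, rule_format, OF c1, of 0] by simp
      then show ?thesis by (rule tendsto_within_subset) auto
    qed
    have lv2: "(v2 \<longlongrightarrow> v2 0) (at_right 0)"
    proof -
      have "(v2 \<longlongrightarrow> v2 0) (at 0 within {0..})"
        using continuous_on_def[THEN iffD1, rule_format, OF c2, of 0] by simp
      then show ?thesis by (rule tendsto_within_subset) auto
    qed
    have ev0: "\<forall>\<^sub>F s in at_right (0::real). 0 < s" by (rule eventually_at_right_less)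
    have lP: "((\<lambda>s. s powr K) \<longlongrightarrow> 0) (at_right 0)"
      by (rule tendsto_zero_powrI[OF tendsto_ident_at tendsto_const]) (use ev0 Kpos in \<open>auto elim: eventually_mono\<close>)
    have lQ: "((\<lambda>s. s powr 2) \<longlongrightarrow> 0) (at_right (0::real))"
      by (rule tendsto_zero_powrI[OF tendsto_ident_at tendsto_const]) (use ev0 in \<open>auto elim: eventually_mono\<close>)
    have lX: "(X \<longlongrightarrow> K) (at_right 0)" unfolding X_def using tendsto_add[OF lim1 tendsto_const[of K]] by simp
    have lY: "(Y \<longlongrightarrow> 2) (at_right 0)" unfolding Y_def using tendsto_add[OF lim2 tendsto_const[of 2]] by simp
    have "(E \<longlongrightarrow> c * (K * K + 2*\<tau>*K*2 + 2 * 2) + 0 * exp (v1 0) + 0 * exp (v2 0)) (at_right 0)"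
      unfolding E_def by (intro tendsto_intros lX lY lP lQ lv1 lv2)
    then have lE: "(E \<longlongrightarrow> E0) (at_right 0)" unfolding E0_def by simp
    have evE: "\<forall>\<^sub>F s in at_right 0. E s = E 1"
      using ev0 by (rule eventually_mono) (rule Econst)
    have "((\<lambda>s::real. E 1) \<longlongrightarrow> E0) (at_right 0)"
      using Lim_transform_eventually[OF lE evE] .
    then have E1: "E0 = E 1" by (rule tendsto_unique[OF trivial_limit_at_right_real _ tendsto_const])
    have q: "0 \<le> X r * X r + 2*\<tau>*X r*Y r + Y r * Y r"
    proof -
      have "0 \<le> (X r + \<tau> * Y r)^2 + (1-\<tau>^2) * (Y r)^2" using tau2 by simp
      also have "\<dots> = X r * X r + 2*\<tau>*X r*Y r + Y r * Y r" by (simp add: algebra_simps power2_eq_square)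
      finally show ?thesis .
    qed
    have Er: "E r = E0" using Econst[OF r] E1 by simp
    have P1: "0 < r powr K * exp (v1 r)" and P2: "0 < r powr 2 * exp (v2 r)" using r by auto
    have "c * (X r * X r + 2*\<tau>*X r*Y r + Y r * Y r) \<ge> 0" using cpos q by simp
    then have b1: "r powr K * exp (v1 r) \<le> E0" and b2: "r powr 2 * exp (v2 r) \<le> E0"
    proof -
      have "E r = c * (X r * X r + 2*\<tau>*X r*Y r + Y r * Y r) + r powr K * exp (v1 r) + r powr 2 * exp (v2 r)"
        unfolding E_def by (rule refl)
      then show "r powr K * exp (v1 r) \<le> E0" "r powr 2 * exp (v2 r) \<le> E0" using Er P1 P2 \<open>c * _ \<ge> 0\<close> by linarith+
    qed
    have "ln (r powr K * exp (v1 r)) \<le> ln E0" using b1 P1 by simp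
    moreover have "ln (r powr K * exp (v1 r)) = v1 r + 2*(N+1) * ln r"
      using r by (simp add: ln_mult K_def algebra_simps)
    moreover have "ln (r powr 2 * exp (v2 r)) \<le> ln E0" using b2 P2 by simp
    moreover have "ln (r powr 2 * exp (v2 r)) = v2 r + 2 * ln r"
      using r by (simp add: ln_mult ln_realpow algebra_simps)
    ultimately show "v1 r + 2*(N+1) * ln r \<le> \<bar>ln E0\<bar> + 1 \<and> v2 r + 2 * ln r \<le> \<bar>ln E0\<bar> + 1"
      by linarith
  qed
  qed
qed

end
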